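(* Let $T$ be a frequently hypercyclic operator on a Banach space $X$. If $T$ admits a frequently hypercyclic subspace, then there exists a product $\times$ on $X$ such that $(X,\times)$ is a commutative Banach algebra and the set $FHC(T)$ of frequently hypercyclic vectors for $T$ is strongly algebrable with respect to $\times$.
   Context: A vector $x$ is frequently hypercyclic for $T$ if for every non-empty open $U\subset X$ the set $\{n\in\mathbb N_0:T^nx\in U\}$ has positive lower density $\liminf_{N\to\infty}\frac{\mathrm{card}(A\cap[0,N])}{N+1}$. A frequently hypercyclic subspace for $T$ is a closed infinite-dimensional subspace all of whose non-zero elements are frequently hypercyclic for $T$. A Banach algebra is an associative complex algebra that is a Banach space with $\|xy\|\le\|x\|\|y\|$. For a commutative algebra, $FHC(T)$ is strongly algebrable if there is an algebraically independent sequence $(x_n)_n$ such that every non-zero element of the algebra generated by $(x_n)_n$ lies in $FHC(T)$ (equivalently, $FHC(T)$ contains, except zero, an infinitely generated algebra isomorphic to a free algebra). *)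

theory Defs
  imports "HOL-Analysis.Analysis" "HOL-Library.Liminf_Limsup"
begin

text \<open>A complex Banach space: a real Banach space of type 'a together with a complex
  scalar multiplication extending the real one and compatible with the norm.\<close>
definition complex_banach :: "(complex \<Rightarrow> 'a::banach \<Rightarrow> 'a) \<Rightarrow> bool" where
  "complex_banach sc \<longleftrightarrow> vector_space sc
     \<and> (\<forall>r x. sc (complex_of_real r) x = scaleR r x)
     \<and> (\<forall>c x. norm (sc c x) = cmod c * norm x)"

definition bounded_clinear_op :: "(complex \<Rightarrow> 'a::banach \<Rightarrow> 'a) \<Rightarrow> ('a \<Rightarrow> 'a) \<Rightarrow> bool" where
  "bounded_clinear_op sc T \<longleftrightarrow> bounded_linear T \<and> (\<forall>c x. T (sc c x) = sc c (T x))"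

definition lower_density :: "nat set \<Rightarrow> ereal" where
  "lower_density A = liminf (\<lambda>N. ereal (real (card (A \<inter> {0..N})) / real (N + 1)))"

definition freq_hypercyclic :: "('a::topological_space \<Rightarrow> 'a) \<Rightarrow> 'a \<Rightarrow> bool" where
  "freq_hypercyclic T x \<longleftrightarrow>
     (\<forall>U. open U \<and> U \<noteq> {} \<longrightarrow> lower_density {n. (T ^^ n) x \<in> U} > 0)"

definition FHC :: "('a::topological_space \<Rightarrow> 'a) \<Rightarrow> 'a set" where
  "FHC T = {x. freq_hypercyclic T x}"

text \<open>Frequently hypercyclic subspace: closed, infinite-dimensional (over \<complex>) subspace
  all of whose non-zero elements are frequently hypercyclic.\<close>
definition fhc_subspace :: "(complex \<Rightarrow> 'a::banach \<Rightarrow> 'a) \<Rightarrow> ('a \<Rightarrow> 'a) \<Rightarrow> 'a set \<Rightarrow> bool" where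
  "fhc_subspace sc T M \<longleftrightarrow> module.subspace sc M \<and> closed M
     \<and> (\<forall>F. finite F \<longrightarrow> \<not> M \<subseteq> module.span sc F)
     \<and> (\<forall>x\<in>M. x \<noteq> 0 \<longrightarrow> x \<in> FHC T)"

definition comm_banach_algebra_product ::
  "(complex \<Rightarrow> 'a::banach \<Rightarrow> 'a) \<Rightarrow> ('a \<Rightarrow> 'a \<Rightarrow> 'a) \<Rightarrow> bool" where
  "comm_banach_algebra_product sc m \<longleftrightarrow>
     (\<forall>x y z. m (x + y) z = m x z + m y z)
   \<and> (\<forall>x y z. m x (y + z) = m x y + m x z)
   \<and> (\<forall>c x y. m (sc c x) y = sc c (m x y))
   \<and> (\<forall>c x y. m x (sc c y) = sc c (m x y))
   \<and> (\<forall>x y z. m (m x y) z = m x (m y z))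
   \<and> (\<forall>x y. m x y = m y x)
   \<and> (\<forall>x y. norm (m x y) \<le> norm x * norm y)"

text \<open>Powers a^(k+1) in a (possibly non-unital) algebra.\<close>
fun apow :: "('a \<Rightarrow> 'a \<Rightarrow> 'a) \<Rightarrow> 'a \<Rightarrow> nat \<Rightarrow> 'a" where
  "apow m a 0 = a"
| "apow m a (Suc k) = m a (apow m a k)"

fun mprod :: "('a \<Rightarrow> 'a \<Rightarrow> 'a) \<Rightarrow> 'a::zero list \<Rightarrow> 'a" where
  "mprod m [] = 0"
| "mprod m [a] = a"
| "mprod m (a # b # as) = m a (mprod m (b # as))"

text \<open>Monomial x^\<alpha> = \<Prod>_{i, \<alpha> i \<noteq> 0} (x i)^(\<alpha> i), for a nonzero finitely supported \<alpha>.\<close>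
definition monomial_eval :: "('a \<Rightarrow> 'a \<Rightarrow> 'a) \<Rightarrow> (nat \<Rightarrow> 'a::zero) \<Rightarrow> (nat \<Rightarrow> nat) \<Rightarrow> 'a" where
  "monomial_eval m x \<alpha> =
     mprod m (map (\<lambda>i. apow m (x i) (\<alpha> i - 1)) (sorted_list_of_set {i. \<alpha> i \<noteq> 0}))"

text \<open>Algebraic independence: no nonzero polynomial without constant term vanishes at x.\<close>
definition alg_independent ::
  "(complex \<Rightarrow> 'a::banach \<Rightarrow> 'a) \<Rightarrow> ('a \<Rightarrow> 'a \<Rightarrow> 'a) \<Rightarrow> (nat \<Rightarrow> 'a) \<Rightarrow> bool" where
  "alg_independent sc m x \<longleftrightarrow>
     (\<forall>S c. finite S \<longrightarrow> (\<forall>\<alpha>\<in>S. \<alpha> \<noteq> (\<lambda>_. 0) \<and> finite {i. \<alpha> i \<noteq> 0}) \<longrightarrow>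
        (\<Sum>\<alpha>\<in>S. sc (c \<alpha>) (monomial_eval m x \<alpha>)) = 0 \<longrightarrow> (\<forall>\<alpha>\<in>S. c \<alpha> = 0))"

inductive_set gen_algebra ::
  "(complex \<Rightarrow> 'a::banach \<Rightarrow> 'a) \<Rightarrow> ('a \<Rightarrow> 'a \<Rightarrow> 'a) \<Rightarrow> (nat \<Rightarrow> 'a) \<Rightarrow> 'a set"
  for sc m x where
  gen: "x n \<in> gen_algebra sc m x"
| add: "a \<in> gen_algebra sc m x \<Longrightarrow> b \<in> gen_algebra sc m x \<Longrightarrow> a + b \<in> gen_algebra sc m x"
| smult: "a \<in> gen_algebra sc m x \<Longrightarrow> sc c a \<in> gen_algebra sc m x"
| mult: "a \<in> gen_algebra sc m x \<Longrightarrow> b \<in> gen_algebra sc m x \<Longrightarrow> m a b \<in> gen_algebra sc m x"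

definition strongly_algebrable ::
  "(complex \<Rightarrow> 'a::banach \<Rightarrow> 'a) \<Rightarrow> ('a \<Rightarrow> 'a \<Rightarrow> 'a) \<Rightarrow> 'a set \<Rightarrow> bool" where
  "strongly_algebrable sc m A \<longleftrightarrow>
     (\<exists>x. alg_independent sc m x \<and> (\<forall>y\<in>gen_algebra sc m x. y \<noteq> 0 \<longrightarrow> y \<in> A))"

end

theory Submission
  imports Defs "HOL-Computational_Algebra.Polynomial"
begin

definition hb_good :: "'a::real_normed_vector \<Rightarrow> ('a \<times> real) set \<Rightarrow> bool" where
  "hb_good u G \<longleftrightarrow> {(t *\<^sub>R u, t * norm u) | t. True} \<subseteq> G
     \<and> (\<forall>x a b. (x,a)\<in>G \<longrightarrow> (x,b)\<in>G \<longrightarrow> a = b)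
     \<and> (\<forall>x a y b. (x,a)\<in>G \<longrightarrow> (y,b)\<in>G \<longrightarrow> (x+y,a+b)\<in>G)
     \<and> (\<forall>x a r. (x,a)\<in>G \<longrightarrow> (r *\<^sub>R x, r*a)\<in>G)
     \<and> (\<forall>x a. (x,a)\<in>G \<longrightarrow> a \<le> norm x)"

lemma hb_base_good:
  assumes "u \<noteq> 0"
  shows "hb_good u {(t *\<^sub>R u, t * norm u) | t. True}"
  unfolding hb_good_def
proof (intro conjI allI impI)
  fix x a b assume "(x,a) \<in> {(t *\<^sub>R u, t * norm u) | t. True}" "(x,b) \<in> {(t *\<^sub>R u, t * norm u) | t. True}"
  then obtain s t where "x = s *\<^sub>R u" "a = s * norm u" "x = t *\<^sub>R u" "b = t * norm u" by blast
  then have "s = t" using assms by (metis scaleR_cancel_right)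
  then show "a = b" using \<open>a = _\<close> \<open>b = _\<close> by simp
next
  fix x a assume "(x,a) \<in> {(t *\<^sub>R u, t * norm u) | t. True}"
  then obtain s where "x = s *\<^sub>R u" "a = s * norm u" by auto
  then show "a \<le> norm x" by (simp add: mult_right_mono)
next
  fix x a y b assume "(x,a) \<in> {(t *\<^sub>R u, t * norm u) | t. True}" "(y,b) \<in> {(t *\<^sub>R u, t * norm u) | t. True}"
  then obtain s t where "x = s *\<^sub>R u" "a = s * norm u" "y = t *\<^sub>R u" "b = t * norm u" by blast
  then have "(x+y, a+b) = ((s+t) *\<^sub>R u, (s+t) * norm u)" by (simp add: algebra_simps)
  then show "(x+y, a+b) \<in> {(t *\<^sub>R u, t * norm u) | t. True}" by blast
next
  fix x a r assume "(x,a) \<in> {(t *\<^sub>R u, t * norm u) | t. True}"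
  then obtain s where "x = s *\<^sub>R u" "a = s * norm u" by blast
  then have "(r *\<^sub>R x, r * a) = ((r * s) *\<^sub>R u, (r * s) * norm u)" by simp
  then show "(r *\<^sub>R x, r*a) \<in> {(t *\<^sub>R u, t * norm u) | t. True}" by blast
qed simp

lemma hb_chain:
  assumes u: "u \<noteq> 0" and C: "C \<in> chains {G. hb_good u G}"
  shows "\<exists>U\<in>{G. hb_good u G}. \<forall>X\<in>C. X \<subseteq> U"
proof (cases "C = {}")
  case True then show ?thesis using hb_base_good[OF u] by auto
next
  case False
  have Cg: "\<And>G. G \<in> C \<Longrightarrow> hb_good u G" and ch: "chain\<^sub>\<subseteq> C" using C by (auto simp: chains_def)
  have two: "\<exists>G\<in>C. p \<in> G \<and> q \<in> G" if pq: "p \<in> \<Union>C" "q \<in> \<Union>C" for p q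
  proof -
    obtain G1 G2 where "G1 \<in> C" "G2 \<in> C" "p \<in> G1" "q \<in> G2" using pq by blast
    then show ?thesis using ch unfolding chain_subset_def by blast
  qed
  have "hb_good u (\<Union>C)"
    unfolding hb_good_def
  proof (intro conjI allI impI)
    obtain G where "G \<in> C" using False by auto
    then show "{(t *\<^sub>R u, t * norm u) | t. True} \<subseteq> \<Union>C" using Cg[of G] unfolding hb_good_def by blast
  next
    fix x a b assume "(x,a) \<in> \<Union>C" "(x,b) \<in> \<Union>C"
    then obtain G where "G \<in> C" "(x,a)\<in>G" "(x,b)\<in>G" using two by blast
    then show "a = b" using Cg[of G] unfolding hb_good_def by blast
  next
    fix x a y b assume "(x,a) \<in> \<Union>C" "(y,b) \<in> \<Union>C"
    then obtain G where "G \<in> C" "(x,a)\<in>G" "(y,b)\<in>G" using two by blast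
    then show "(x+y,a+b) \<in> \<Union>C" using Cg[of G] unfolding hb_good_def by blast
  next
    fix x a r assume "(x,a) \<in> \<Union>C"
    then obtain G where "G \<in> C" "(x,a)\<in>G" by blast
    then show "(r *\<^sub>R x, r*a) \<in> \<Union>C" using Cg[of G] unfolding hb_good_def by blast
  next
    fix x a assume "(x,a) \<in> \<Union>C"
    then obtain G where "G \<in> C" "(x,a)\<in>G" by blast
    then show "a \<le> norm x" using Cg[of G] unfolding hb_good_def by blast
  qed
  then show ?thesis by auto
qed

lemma hb_extend:
  assumes G: "hb_good u G" and x0: "x0 \<notin> fst ` G"
  shows "\<exists>G'. hb_good u G' \<and> G \<subseteq> G' \<and> G' \<noteq> G"
proof -
  have fnG: "\<And>x a b. (x,a)\<in>G \<Longrightarrow> (x,b)\<in>G \<Longrightarrow> a = b"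
   and addG: "\<And>x a y b. (x,a)\<in>G \<Longrightarrow> (y,b)\<in>G \<Longrightarrow> (x+y,a+b)\<in>G"
   and smulG: "\<And>x a r. (x,a)\<in>G \<Longrightarrow> (r *\<^sub>R x, r*a)\<in>G"
   and bd: "\<And>x a. (x,a)\<in>G \<Longrightarrow> a \<le> norm x"
   and base: "{(t *\<^sub>R u, t * norm u) | t. True} \<subseteq> G"
    using G unfolding hb_good_def by blast+
  have zero: "(0,0) \<in> G" using base by force
  define L where "L = {a - norm (y - x0) | y a. (y,a) \<in> G}"
  have key: "a - norm (y - x0) \<le> norm (z + x0) - b" if "(y,a)\<in>G" "(z,b)\<in>G" for y a z b
  proof -
    have "a + b \<le> norm (y + z)" using bd[OF addG[OF that]] .
    also have "\<dots> = norm ((y - x0) + (z + x0))" by (simp add: algebra_simps)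
    also have "\<dots> \<le> norm (y - x0) + norm (z + x0)" by (rule norm_triangle_ineq)
    finally show ?thesis by simp
  qed
  have Lne: "L \<noteq> {}" using zero unfolding L_def by blast
  have Lbdd: "bdd_above L" unfolding L_def bdd_above_def using key[OF _ zero] by blast
  define c where "c = Sup L"
  have c1: "a - norm (y - x0) \<le> c" if "(y,a)\<in>G" for y a
    unfolding c_def by (rule cSup_upper[OF _ Lbdd]) (use that L_def in blast)
  have c2: "c \<le> norm (z + x0) - b" if "(z,b)\<in>G" for z b
    unfolding c_def by (rule cSup_least[OF Lne]) (use key that L_def in blast)
  define G' where "G' = {(y + t *\<^sub>R x0, a + t * c) | y a t. (y,a) \<in> G}"
  have memG': "(y + t *\<^sub>R x0, a + t*c) \<in> G'" if "(y,a)\<in>G" for y a t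
    unfolding G'_def using that by blast
  have GG': "G \<subseteq> G'"
  proof safe
    fix y a assume "(y,a) \<in> G"
    then have "(y,a) = (y + 0 *\<^sub>R x0, a + 0*c) \<and> (y,a)\<in>G" by simp
    then show "(y,a) \<in> G'" unfolding G'_def by blast
  qed
  have x0G': "(x0, c) \<in> G'"
  proof -
    have "(x0, c) = (0 + 1 *\<^sub>R x0, 0 + 1*c) \<and> (0,0)\<in>G" using zero by simp
    then show ?thesis unfolding G'_def by blast
  qed
  have neq: "G' \<noteq> G" using x0G' x0 by force
  have dom: "y \<in> fst ` G" if "(y,a)\<in>G" for y a using that by force
  have domsc: "r *\<^sub>R y \<in> fst ` G" if "y \<in> fst ` G" for y r
    using that smulG by force
  have domdiff: "y - z \<in> fst ` G" if yz: "y \<in> fst ` G" "z \<in> fst ` G" for y z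
  proof -
    obtain a b where "(y,a)\<in>G" "(z,b)\<in>G" using yz by force
    then have "(y + (-1) *\<^sub>R z, a + (-1)*b) \<in> G" using addG smulG by blast
    then show ?thesis by force
  qed
  have bound: "a + t * c \<le> norm (y + t *\<^sub>R x0)" if "(y,a)\<in>G" for y a t
  proof (cases "t = 0")
    case True then show ?thesis using bd[OF that] by simp
  next
    case False
    show ?thesis
    proof (cases "t > 0")
      case True
      have "((1/t) *\<^sub>R y, (1/t) * a) \<in> G" using smulG[OF that] .
      from c2[OF this] have "c \<le> norm ((1/t) *\<^sub>R y + x0) - (1/t)*a" .
      then have "t * c \<le> t * (norm ((1/t) *\<^sub>R y + x0) - (1/t)*a)" using True by (simp add: mult_left_mono)
      also have "\<dots> = norm (t *\<^sub>R ((1/t) *\<^sub>R y + x0)) - a" using True by (simp add: right_diff_distrib)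
      also have "t *\<^sub>R ((1/t) *\<^sub>R y + x0) = y + t *\<^sub>R x0" using True by (simp add: scaleR_add_right)
      finally show ?thesis by simp
    next
      case nt: False
      with False have tn: "t < 0" by simp
      define s where "s = - t"
      have s: "s > 0" using tn s_def by simp
      have "((1/s) *\<^sub>R y, (1/s) * a) \<in> G" using smulG[OF that] .
      from c1[OF this] have "(1/s)*a - norm ((1/s) *\<^sub>R y - x0) \<le> c" .
      then have "s * ((1/s)*a - norm ((1/s) *\<^sub>R y - x0)) \<le> s * c" using s by (simp add: mult_left_mono)
      then have "a - norm (s *\<^sub>R ((1/s) *\<^sub>R y - x0)) \<le> s * c" using s by (simp add: right_diff_distrib)
      also have "s *\<^sub>R ((1/s) *\<^sub>R y - x0) = y + t *\<^sub>R x0" using s s_def by (simp add: scaleR_diff_right)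
      finally show ?thesis using s_def by simp
    qed
  qed
  have "hb_good u G'"
    unfolding hb_good_def
  proof (intro conjI allI impI)
    show "{(t *\<^sub>R u, t * norm u) | t. True} \<subseteq> G'" using base GG' by blast
  next
    fix x a b assume "(x,a)\<in>G'" "(x,b)\<in>G'"
    then obtain y1 a1 t1 y2 a2 t2 where h: "(y1,a1)\<in>G" "(y2,a2)\<in>G" "x = y1 + t1 *\<^sub>R x0" "a = a1 + t1*c"
      "x = y2 + t2 *\<^sub>R x0" "b = a2 + t2*c" unfolding G'_def by blast
    have t: "t1 = t2"
    proof (rule ccontr)
      assume "t1 \<noteq> t2"
      have "(t1 - t2) *\<^sub>R x0 = y2 - y1" using h by (simp add: algebra_simps)
      then have "(1/(t1-t2)) *\<^sub>R ((t1 - t2) *\<^sub>R x0) = (1/(t1-t2)) *\<^sub>R (y2 - y1)" by (rule arg_cong)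
      then have "x0 = (1/(t1-t2)) *\<^sub>R (y2 - y1)" using \<open>t1 \<noteq> t2\<close> by simp
      moreover have "y2 - y1 \<in> fst ` G" using domdiff[OF dom[OF h(2)] dom[OF h(1)]] .
      then have "(1/(t1-t2)) *\<^sub>R (y2 - y1) \<in> fst ` G" by (rule domsc)
      ultimately show False using x0 by simp
    qed
    then have "y1 = y2" using h by simp
    then show "a = b" using h t fnG by simp
  next
    fix x a y b assume "(x,a)\<in>G'" "(y,b)\<in>G'"
    then obtain y1 a1 t1 y2 a2 t2 where h: "(y1,a1)\<in>G" "(y2,a2)\<in>G" "x = y1 + t1 *\<^sub>R x0" "a = a1 + t1*c"
      "y = y2 + t2 *\<^sub>R x0" "b = a2 + t2*c" unfolding G'_def by blast
    have "(y1+y2, a1+a2) \<in> G" using addG h by blast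
    moreover have "x + y = (y1 + y2) + (t1+t2) *\<^sub>R x0" "a + b = (a1+a2) + (t1+t2)*c"
      using h by (simp_all add: algebra_simps)
    ultimately show "(x+y, a+b) \<in> G'" using memG' by metis
  next
    fix x a r assume "(x,a)\<in>G'"
    then obtain y1 a1 t1 where h: "(y1,a1)\<in>G" "x = y1 + t1 *\<^sub>R x0" "a = a1 + t1*c"
      unfolding G'_def by blast
    have "(r *\<^sub>R y1, r*a1) \<in> G" using smulG h by blast
    moreover have "r *\<^sub>R x = r *\<^sub>R y1 + (r*t1) *\<^sub>R x0" "r * a = r*a1 + (r*t1)*c"
      using h by (simp_all add: algebra_simps)
    ultimately show "(r *\<^sub>R x, r*a) \<in> G'" using memG' by metis
  next
    fix x a assume "(x,a)\<in>G'"
    then obtain y1 a1 t1 where h: "(y1,a1)\<in>G" "x = y1 + t1 *\<^sub>R x0" "a = a1 + t1*c"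
      unfolding G'_def by blast
    then show "a \<le> norm x" using bound by simp
  qed
  then show ?thesis using GG' neq by blast
qed

lemma real_hahn_banach_norming:
  fixes u :: "'a::real_normed_vector"
  assumes u: "u \<noteq> 0"
  shows "\<exists>f. (\<forall>x y. f (x + y) = f x + f y) \<and> (\<forall>r x. f (r *\<^sub>R x) = r * f x)
           \<and> (\<forall>x. \<bar>f x\<bar> \<le> norm x) \<and> f u = norm u"
proof -
  obtain G where G: "hb_good u G" and max: "\<forall>X. hb_good u X \<longrightarrow> G \<subseteq> X \<longrightarrow> X = G"
    using Zorn_Lemma2[of "{G. hb_good u G}"] hb_chain[OF u] by auto
  have tot: "x \<in> fst ` G" for x
    using hb_extend[OF G, of x] max by blast
  have fnG: "\<And>x a b. (x,a)\<in>G \<Longrightarrow> (x,b)\<in>G \<Longrightarrow> a = b"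
   and addG: "\<And>x a y b. (x,a)\<in>G \<Longrightarrow> (y,b)\<in>G \<Longrightarrow> (x+y,a+b)\<in>G"
   and smulG: "\<And>x a r. (x,a)\<in>G \<Longrightarrow> (r *\<^sub>R x, r*a)\<in>G"
   and bd: "\<And>x a. (x,a)\<in>G \<Longrightarrow> a \<le> norm x"
   and base: "{(t *\<^sub>R u, t * norm u) | t. True} \<subseteq> G"
    using G unfolding hb_good_def by blast+
  define f where "f x = (THE a. (x,a) \<in> G)" for x
  have fG: "(x, f x) \<in> G" for x
  proof -
    obtain a where "(x,a) \<in> G" using tot[of x] by force
    then show ?thesis unfolding f_def by (rule theI[of _ a]) (use \<open>(x,a)\<in>G\<close> fnG in auto)
  qed
  have fv: "f x = a" if "(x,a)\<in>G" for x a using fnG[OF fG that] .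
  have "f (x + y) = f x + f y" for x y using fv[OF addG[OF fG fG]] .
  moreover have "f (r *\<^sub>R x) = r * f x" for r x using fv[OF smulG[OF fG]] .
  moreover have "\<bar>f x\<bar> \<le> norm x" for x
  proof -
    have "f x \<le> norm x" using bd[OF fG] .
    moreover have "f ((-1) *\<^sub>R x) = - f x" using fv[OF smulG[where r="-1", OF fG[of x]]] by simp
    then have "- f x \<le> norm x" using bd[OF fG, of "(-1) *\<^sub>R x"] by simp
    ultimately show ?thesis by simp
  qed
  moreover have "f u = norm u"
  proof -
    have "(1 *\<^sub>R u, 1 * norm u) \<in> G" using base by blast
    then show ?thesis using fv[of u "norm u"] by simp
  qed
  ultimately show ?thesis by blast
qed

locale cb =
  fixes sc :: "complex \<Rightarrow> 'a::banach \<Rightarrow> 'a"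
  assumes cb: "complex_banach sc"
begin

lemma vs: "vector_space sc" using cb unfolding complex_banach_def by blast

sublocale V: vector_space sc by (rule vs)

lemma sc_real: "sc (complex_of_real r) x = r *\<^sub>R x" using cb unfolding complex_banach_def by blast
lemma sc_norm: "norm (sc c x) = cmod c * norm x" using cb unfolding complex_banach_def by blast

lemma sc_addr: "sc c (x + y) = sc c x + sc c y" by (rule V.scale_right_distrib)
lemma sc_addl: "sc (a + b) x = sc a x + sc b x" by (rule V.scale_left_distrib)
lemma sc_sc: "sc a (sc b x) = sc (a * b) x" by (rule V.scale_scale)
lemma sc_one: "sc 1 x = x" by (rule V.scale_one)
lemma sc_zero_r: "sc c 0 = 0" by (rule V.scale_zero_right)
lemma sc_zero_l: "sc 0 x = 0" by (rule V.scale_zero_left)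

lemma sc_scaleR: "sc c (r *\<^sub>R x) = r *\<^sub>R sc c x"
proof -
  have "sc c (r *\<^sub>R x) = sc c (sc (complex_of_real r) x)" by (simp add: sc_real)
  also have "\<dots> = sc (c * complex_of_real r) x" by (rule sc_sc)
  also have "\<dots> = sc (complex_of_real r * c) x" by (simp add: mult.commute)
  also have "\<dots> = sc (complex_of_real r) (sc c x)" by (rule sc_sc[symmetric])
  also have "\<dots> = r *\<^sub>R sc c x" by (rule sc_real)
  finally show ?thesis .
qed

lemma bl_sc: "bounded_linear (sc c)"
  by (rule bounded_linear_intro[of _ "cmod c"]) (auto simp: sc_addr sc_scaleR sc_norm mult.commute)

lemma sc_sum: "sc c (\<Sum>i\<in>A. f i) = (\<Sum>i\<in>A. sc c (f i))"
  by (rule linear_sum[OF bounded_linear.linear[OF bl_sc]])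

lemma sum_sc: "sc (\<Sum>i\<in>A. f i) x = (\<Sum>i\<in>A. sc (f i) x)"
  by (induction A rule: infinite_finite_induct) (auto simp: sc_zero_l sc_addl)

lemma sc_minus: "sc c (x - y) = sc c x - sc c y"
  using sc_addr[of c "x - y" y] by (simp add: algebra_simps)

lemma sc_suminf: "summable f \<Longrightarrow> sc c (suminf f) = (\<Sum>n. sc c (f n))"
  using bounded_linear.suminf[OF bl_sc] by metis

definition CL :: "('a \<Rightarrow> complex) \<Rightarrow> bool" where
  "CL g \<longleftrightarrow> bounded_linear g \<and> (\<forall>c x. g (sc c x) = c * g x)"

lemma complex_hb:
  assumes u: "u \<noteq> 0"
  shows "\<exists>h. CL h \<and> h u \<noteq> 0"
proof -
  obtain f where fa: "\<And>x y. f (x + y) = f x + f y" and fs: "\<And>r x. f (r *\<^sub>R x) = r * f x"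
    and fb: "\<And>x. \<bar>f x\<bar> \<le> norm x" and fu: "f u = norm u"
    using real_hahn_banach_norming[OF u] by blast
  define h where "h x = complex_of_real (f x) - \<i> * complex_of_real (f (sc \<i> x))" for x
  have fsc: "f (sc (complex_of_real a) x) = a * f x" for a x by (simp add: sc_real fs)
  have hre: "Re (h x) = f x" for x by (simp add: h_def)
  have hadd: "h (x + y) = h x + h y" for x y by (simp add: h_def fa sc_addr algebra_simps)
  have hR: "h (r *\<^sub>R x) = r *\<^sub>R h x" for r x
    by (simp add: h_def fs sc_scaleR scaleR_conv_of_real algebra_simps)
  have hC: "h (sc c x) = c * h x" for c x
  proof -
    obtain a b where c: "c = Complex a b" by (cases c) auto
    have cc: "c = complex_of_real a + \<i> * complex_of_real b" using c by (simp add: complex_eq_iff)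
    have e1: "sc c x = a *\<^sub>R x + b *\<^sub>R sc \<i> x"
      by (simp add: cc sc_addl sc_real sc_sc[symmetric] sc_scaleR)
    have ii: "sc \<i> (sc \<i> x) = - x"
    proof -
      have "sc \<i> (sc \<i> x) = sc (complex_of_real (-1)) x" by (simp add: sc_sc)
      then show ?thesis by (simp add: sc_real)
    qed
    have e2: "sc \<i> (sc c x) = a *\<^sub>R sc \<i> x - b *\<^sub>R x"
      by (simp add: e1 sc_addr sc_scaleR ii)
    have "f (- x) = - f x" using fs[of "-1" x] by simp
    have f1: "f (sc c x) = a * f x + b * f (sc \<i> x)" by (simp add: e1 fa fs)
    have f2: "f (sc \<i> (sc c x)) = a * f (sc \<i> x) - b * f x"
    proof -
      have "f (a *\<^sub>R sc \<i> x - b *\<^sub>R x) = f (a *\<^sub>R sc \<i> x + (-b) *\<^sub>R x)" by simp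
      also have "\<dots> = a * f (sc \<i> x) + (-b) * f x" by (simp only: fa fs)
      finally show ?thesis unfolding e2 by simp
    qed
    show ?thesis unfolding h_def unfolding f1 f2 unfolding cc by (simp add: algebra_simps)
  qed
  have hb: "norm (h x) \<le> norm x" for x
  proof (cases "h x = 0")
    case True then show ?thesis by simp
  next
    case False
    define c where "c = cnj (h x) / complex_of_real (cmod (h x))"
    have cm: "cmod c = 1" using False by (simp add: c_def norm_divide)
    have "h (sc c x) = (h x * cnj (h x)) / complex_of_real (cmod (h x))"
      by (simp add: hC c_def)
    also have "\<dots> = complex_of_real ((cmod (h x))\<^sup>2) / complex_of_real (cmod (h x))"
      by (simp only: complex_norm_square)
    also have "\<dots> = complex_of_real (cmod (h x))"
      using False by (simp add: power2_eq_square)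
    finally have "h (sc c x) = complex_of_real (cmod (h x))" .
    then have "cmod (h x) = f (sc c x)" using hre[of "sc c x"] by simp
    also have "\<dots> \<le> norm (sc c x)" using fb[of "sc c x"] by simp
    also have "\<dots> = norm x" by (simp add: sc_norm cm)
    finally show ?thesis by simp
  qed
  have "bounded_linear h"
    by (rule bounded_linear_intro[of _ 1]) (auto simp: hadd hR hb)
  moreover have "h u \<noteq> 0"
  proof
    assume "h u = 0"
    then have "Re (h u) = 0" by simp
    then show False using hre[of u] fu u by simp
  qed
  ultimately show ?thesis using hC unfolding CL_def by blast
qed

end

context cb begin

lemma CL_lin: "CL g \<Longrightarrow> linear g" unfolding CL_def using bounded_linear.linear by blast
lemma CL_add: "CL g \<Longrightarrow> g (x + y) = g x + g y" using CL_lin linear_add by blast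
lemma CL_diff: "CL g \<Longrightarrow> g (x - y) = g x - g y" using CL_lin linear_diff by blast
lemma CL_0: "CL g \<Longrightarrow> g 0 = 0" using CL_lin linear_0 by blast
lemma CL_sum: "CL g \<Longrightarrow> g (\<Sum>i\<in>A. f i) = (\<Sum>i\<in>A. g (f i))" using CL_lin linear_sum by blast
lemma CL_sc: "CL g \<Longrightarrow> g (sc c x) = c * g x" unfolding CL_def by blast
lemma CL_bl: "CL g \<Longrightarrow> bounded_linear g" unfolding CL_def by blast
lemma CL_suminf: "CL g \<Longrightarrow> summable f \<Longrightarrow> g (suminf f) = (\<Sum>n. g (f n))"
  using bounded_linear.suminf[OF CL_bl] by metis

end

locale cbM = cb sc for sc :: "complex \<Rightarrow> 'a::banach \<Rightarrow> 'a" +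
  fixes M :: "'a set"
  assumes Msub: "module.subspace sc M" and Mclosed: "closed M"
    and Minf: "\<And>F. finite F \<Longrightarrow> \<not> M \<subseteq> module.span sc F"
begin

definition good_ext :: "('a \<times> ('a \<Rightarrow> complex)) list \<Rightarrow> ('a \<times> ('a \<Rightarrow> complex)) \<Rightarrow> bool" where
  "good_ext L p \<longleftrightarrow> fst p \<in> M \<and> CL (snd p) \<and> snd p (fst p) = 1
     \<and> (\<forall>q\<in>set L. snd p (fst q) = 0 \<and> snd q (fst p) = 0)"

definition biorth :: "('a \<times> ('a \<Rightarrow> complex)) list \<Rightarrow> bool" where
  "biorth L \<longleftrightarrow> (\<forall>i<length L. fst (L!i) \<in> M \<and> CL (snd (L!i))
     \<and> (\<forall>j<length L. snd (L!i) (fst (L!j)) = (if i = j then 1 else 0)))"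

lemma ext_exists:
  assumes B: "biorth L"
  shows "\<exists>p. good_ext L p"
proof -
  define n where "n = length L"
  define u where "u i = fst (L!i)" for i
  define g where "g i = snd (L!i)" for i
  have uM: "u i \<in> M" if "i < n" for i using B that unfolding biorth_def u_def n_def by blast
  have gCL: "CL (g i)" if "i < n" for i using B that unfolding biorth_def g_def n_def by blast
  have gu: "g i (u j) = (if i = j then 1 else 0)" if "i < n" "j < n" for i j
    using B that unfolding biorth_def g_def u_def n_def by blast
  have "finite (fst ` set L)" by simp
  from Minf[OF this] obtain v where vM: "v \<in> M" and vF: "v \<notin> module.span sc (fst ` set L)" by blast
  define v' where "v' = v - (\<Sum>i<n. sc (g i v) (u i))"
  have v'M: "v' \<in> M" unfolding v'_def
    by (intro V.subspace_diff[OF Msub] vM V.subspace_sum[OF Msub] V.subspace_scale[OF Msub] uM) simp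
  have gv': "g j v' = 0" if "j < n" for j
  proof -
    have "g j v' = g j v - (\<Sum>i<n. g i v * g j (u i))"
      unfolding v'_def using gCL[OF that] by (simp add: CL_diff CL_sum CL_sc)
    also have "(\<Sum>i<n. g i v * g j (u i)) = (\<Sum>i<n. if i = j then g j v else 0)"
      by (rule sum.cong) (use gu that in auto)
    also have "\<dots> = g j v" using that by simp
    finally show ?thesis by simp
  qed
  have v'0: "v' \<noteq> 0"
  proof
    assume "v' = 0"
    then have "v = (\<Sum>i<n. sc (g i v) (u i))" unfolding v'_def by simp
    also have "\<dots> \<in> module.span sc (fst ` set L)"
    proof (rule V.span_sum, rule V.span_scale, rule V.span_base)
      fix i assume "i \<in> {..<n}"
      then show "u i \<in> fst ` set L" unfolding u_def n_def by auto
    qed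
    finally show False using vF by simp
  qed
  obtain h where hCL: "CL h" and hv: "h v' \<noteq> 0" using complex_hb[OF v'0] by blast
  define g' where "g' x = (h x - (\<Sum>i<n. h (u i) * g i x)) / h v'" for x
  have bl: "bounded_linear g'"
  proof -
    have "bounded_linear (\<lambda>x. h x - (\<Sum>i<n. h (u i) * g i x))"
      by (intro bounded_linear_sub CL_bl[OF hCL] bounded_linear_sum
          bounded_linear_compose[OF bounded_linear_mult_right] CL_bl gCL) simp
    then show ?thesis unfolding g'_def by (rule bounded_linear_compose[OF bounded_linear_divide])
  qed
  have "g' (sc c x) = c * g' x" for c x
  proof -
    have "(\<Sum>i<n. h (u i) * g i (sc c x)) = c * (\<Sum>i<n. h (u i) * g i x)"
      by (simp add: sum_distrib_left CL_sc gCL algebra_simps)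
    then show ?thesis unfolding g'_def by (simp add: CL_sc[OF hCL] algebra_simps)
  qed
  then have g'CL: "CL g'" using bl unfolding CL_def by blast
  have g'u: "g' (u j) = 0" if "j < n" for j
  proof -
    have "(\<Sum>i<n. h (u i) * g i (u j)) = (\<Sum>i<n. if i = j then h (u j) else 0)"
      by (rule sum.cong) (use gu that in auto)
    also have "\<dots> = h (u j)" using that by simp
    finally show ?thesis unfolding g'_def by simp
  qed
  have g'v': "g' v' = 1" unfolding g'_def using gv' hv by simp
  have "good_ext L (v', g')"
    unfolding good_ext_def
  proof (intro conjI ballI)
    fix q assume "q \<in> set L"
    then obtain j where j: "j < n" "q = L!j" unfolding n_def by (metis in_set_conv_nth)
    show "snd (v', g') (fst q) = 0" using g'u[OF j(1)] j by (simp add: u_def)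
    show "snd q (fst (v', g')) = 0" using gv'[OF j(1)] j by (simp add: g_def)
  qed (use v'M g'CL g'v' in auto)
  then show ?thesis by blast
qed

lemma biorth_snoc:
  assumes B: "biorth L" and G: "good_ext L p"
  shows "biorth (L @ [p])"
  unfolding biorth_def
proof (intro allI impI conjI)
  fix i assume i: "i < length (L @ [p])"
  show "fst ((L @ [p]) ! i) \<in> M"
    using B G i unfolding biorth_def good_ext_def by (cases "i < length L") (auto simp: nth_append)
  show "CL (snd ((L @ [p]) ! i))"
    using B G i unfolding biorth_def good_ext_def by (cases "i < length L") (auto simp: nth_append)
  fix j assume j: "j < length (L @ [p])"
  have li: "i < length L \<or> i = length L" and lj: "j < length L \<or> j = length L" using i j by auto
  show "snd ((L @ [p]) ! i) (fst ((L @ [p]) ! j)) = (if i = j then 1 else 0)"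
    using li lj
  proof (elim disjE)
    assume "i < length L" "j < length L"
    then show ?thesis using B unfolding biorth_def by (simp add: nth_append)
  next
    assume "i < length L" "j = length L"
    then have "L!i \<in> set L" by simp
    then show ?thesis using G \<open>i < length L\<close> \<open>j = length L\<close> unfolding good_ext_def by (auto simp: nth_append)
  next
    assume "i = length L" "j < length L"
    then have "L!j \<in> set L" by simp
    then show ?thesis using G \<open>j < length L\<close> \<open>i = length L\<close> unfolding good_ext_def by (auto simp: nth_append)
  next
    assume "i = length L" "j = length L"
    then show ?thesis using G unfolding good_ext_def by (auto simp: nth_append)
  qed
qed

primrec seqL :: "nat \<Rightarrow> ('a \<times> ('a \<Rightarrow> complex)) list" where
  "seqL 0 = []"
| "seqL (Suc n) = seqL n @ [SOME p. good_ext (seqL n) p]"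

lemma seqL_props: "biorth (seqL n) \<and> length (seqL n) = n"
proof (induction n)
  case 0 then show ?case unfolding biorth_def by simp
next
  case (Suc n)
  then have "good_ext (seqL n) (SOME p. good_ext (seqL n) p)"
    using ext_exists by (metis someI_ex)
  then show ?case using Suc biorth_snoc by simp
qed

lemma seqL_nth: "i < n \<Longrightarrow> seqL n ! i = seqL (Suc i) ! i"
proof (induction n)
  case 0 then show ?case by simp
next
  case (Suc n)
  show ?case
  proof (cases "i < n")
    case True
    then have "seqL (Suc n) ! i = seqL n ! i" using seqL_props[of n] by (simp add: nth_append)
    then show ?thesis using Suc True by simp
  next
    case False
    then have "i = n" using Suc by simp
    then show ?thesis by simp
  qed
qed

definition uu :: "nat \<Rightarrow> 'a" where "uu i = fst (seqL (Suc i) ! i)"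
definition gg :: "nat \<Rightarrow> 'a \<Rightarrow> complex" where "gg i = snd (seqL (Suc i) ! i)"

lemma uu_M: "uu i \<in> M" and gg_CL: "CL (gg i)"
  using seqL_props[of "Suc i"] unfolding biorth_def uu_def gg_def by auto

lemma gg_uu: "gg i (uu j) = (if i = j then 1 else 0)"
proof -
  define N where "N = Suc (max i j)"
  have "i < N" "j < N" unfolding N_def by auto
  then have "snd (seqL N ! i) (fst (seqL N ! j)) = (if i = j then 1 else 0)"
    using seqL_props[of N] unfolding biorth_def by auto
  then show ?thesis using seqL_nth[OF \<open>i < N\<close>] seqL_nth[OF \<open>j < N\<close>] unfolding uu_def gg_def by simp
qed

end

context cbM begin

definition KK :: "nat \<Rightarrow> real" where
  "KK i = (SOME K. K > 0 \<and> (\<forall>x. norm (gg i x) \<le> norm x * K))"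

lemma KK: "KK i > 0" "norm (gg i x) \<le> norm x * KK i"
proof -
  have "\<exists>K. K > 0 \<and> (\<forall>x. norm (gg i x) \<le> norm x * K)"
    using bounded_linear.pos_bounded[OF CL_bl[OF gg_CL]] by blast
  then have "KK i > 0 \<and> (\<forall>x. norm (gg i x) \<le> norm x * KK i)"
    unfolding KK_def by (rule someI_ex)
  then show "KK i > 0" "norm (gg i x) \<le> norm x * KK i" by auto
qed

definition fac :: "nat \<Rightarrow> real" where "fac i = ((KK i)\<^sup>2 + 1) * (norm (uu i) + 1)"
definition WW :: "nat \<Rightarrow> real" where "WW n = (\<Prod>k\<le>n. fac k)"
definition ww :: "nat \<Rightarrow> real" where "ww n = (1/2)^(Suc n) / WW n"

lemma fac_ge1: "fac i \<ge> 1"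
proof -
  have "1 \<le> (KK i)\<^sup>2 + 1" by simp
  moreover have "1 \<le> norm (uu i) + 1" by simp
  ultimately show ?thesis unfolding fac_def using mult_mono[of 1 _ 1] by fastforce
qed

lemma WW_ge1: "WW n \<ge> 1"
  unfolding WW_def by (rule prod_ge_1) (use fac_ge1 in auto)

lemma WW_Suc: "WW (Suc n) = WW n * fac (Suc n)"
  unfolding WW_def by (simp add: atMost_Suc mult.commute)

lemma WW_ge_fac: "WW n \<ge> fac n"
proof (cases n)
  case 0 then show ?thesis by (simp add: WW_def)
next
  case (Suc m)
  then have "WW n = WW m * fac n" using WW_Suc by simp
  also have "\<dots> \<ge> 1 * fac n" using WW_ge1[of m] fac_ge1[of n] by (intro mult_right_mono) auto
  finally show ?thesis by simp
qed

lemma ww_pos: "ww n > 0" unfolding ww_def using WW_ge1[of n] by simp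

lemma ww_le: "ww n \<le> (1/2)^(Suc n)"
  unfolding ww_def using WW_ge1[of n] by (simp add: divide_le_eq)

lemma ww_bound1: "ww n * (KK n)\<^sup>2 * norm (uu n) \<le> (1/2)^(Suc n)"
proof -
  have "(KK n)\<^sup>2 * norm (uu n) \<le> fac n" unfolding fac_def by (simp add: algebra_simps)
  also have "\<dots> \<le> WW n" by (rule WW_ge_fac)
  finally have "(KK n)\<^sup>2 * norm (uu n) \<le> WW n" .
  then have "ww n * ((KK n)\<^sup>2 * norm (uu n)) \<le> ww n * WW n" using ww_pos[of n] by (intro mult_left_mono) auto
  also have "ww n * WW n = (1/2)^(Suc n)" unfolding ww_def using WW_ge1[of n] by simp
  finally show ?thesis by (simp add: mult.assoc)
qed

lemma ww_bound2: "ww n * norm (uu n) \<le> (1/2)^(Suc n)"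
proof -
  have "norm (uu n) \<le> fac n" unfolding fac_def by (simp add: algebra_simps)
  also have "\<dots> \<le> WW n" by (rule WW_ge_fac)
  finally have "norm (uu n) \<le> WW n" .
  then have "ww n * norm (uu n) \<le> ww n * WW n" using ww_pos[of n] by (intro mult_left_mono) auto
  also have "ww n * WW n = (1/2)^(Suc n)" unfolding ww_def using WW_ge1[of n] by simp
  finally show ?thesis .
qed

lemma ww_Suc_less: "ww (Suc n) < ww n"
proof -
  have "ww (Suc n) = (1/2) * ((1/2)^(Suc n) / (WW n * fac (Suc n)))" unfolding ww_def WW_Suc by simp
  also have "(1/2)^(Suc n) / (WW n * fac (Suc n)) \<le> (1/2)^(Suc n) / WW n"
    using WW_ge1[of n] fac_ge1[of "Suc n"]
    by (intro divide_left_mono) (auto intro: order_trans[OF _ mult_left_mono[of 1]])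
  then have "(1/2) * ((1/2)^(Suc n) / (WW n * fac (Suc n))) \<le> (1/2) * ww n" unfolding ww_def by simp
  finally show ?thesis using ww_pos[of n] by simp
qed

lemma ww_strict: "m < n \<Longrightarrow> ww n < ww m"
proof (induction n)
  case 0 then show ?case by simp
next
  case (Suc n)
  then show ?case using ww_Suc_less[of n] by (cases "m = n") auto
qed

definition ser :: "(nat \<Rightarrow> complex) \<Rightarrow> 'a" where "ser a = (\<Sum>n. sc (a n) (uu n))"
definition ok :: "(nat \<Rightarrow> complex) \<Rightarrow> bool" where "ok a \<longleftrightarrow> summable (\<lambda>n. norm (sc (a n) (uu n)))"

lemma ok_summable: "ok a \<Longrightarrow> summable (\<lambda>n. sc (a n) (uu n))"
  unfolding ok_def by (rule summable_norm_cancel)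

lemma half_summable: "summable (\<lambda>n. C * (1/2::real)^Suc n)"
  by (rule summable_mult[OF sums_summable[OF power_half_series]])

lemma ok_bound: assumes "\<And>n. norm (sc (a n) (uu n)) \<le> C * (1/2)^(Suc n)" shows "ok a"
  unfolding ok_def
  by (rule summable_comparison_test'[OF half_summable, of 0]) (use assms in simp)

lemma ser_gg: assumes "ok a" shows "gg k (ser a) = a k"
proof -
  have "gg k (ser a) = (\<Sum>n. gg k (sc (a n) (uu n)))"
    unfolding ser_def by (rule CL_suminf[OF gg_CL ok_summable[OF assms]])
  also have "(\<lambda>n. gg k (sc (a n) (uu n))) = (\<lambda>n. if n = k then a n else 0)"
    by (rule ext) (simp add: CL_sc[OF gg_CL] gg_uu)
  also have "(\<Sum>n. if n = k then a n else 0) = a k" using sums_single[of k a] by (simp add: sums_iff)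
  finally show ?thesis .
qed

lemma ser_M: assumes "ok a" shows "ser a \<in> M"
proof -
  have "(\<lambda>N. \<Sum>n<N. sc (a n) (uu n)) \<longlonglongrightarrow> ser a"
    unfolding ser_def by (rule summable_LIMSEQ[OF ok_summable[OF assms]])
  moreover have "(\<Sum>n<N. sc (a n) (uu n)) \<in> M" for N
    by (intro V.subspace_sum[OF Msub] V.subspace_scale[OF Msub] uu_M)
  ultimately show ?thesis using closed_sequentially[OF Mclosed, of "\<lambda>N. \<Sum>n<N. sc (a n) (uu n)"] by blast
qed

lemma ser_add: assumes "ok a" "ok b" shows "ser a + ser b = ser (\<lambda>n. a n + b n)"
  unfolding ser_def using suminf_add[OF ok_summable[OF assms(1)] ok_summable[OF assms(2)]]
  by (simp add: sc_addl)

lemma ser_sc: assumes "ok a" shows "sc c (ser a) = ser (\<lambda>n. c * a n)"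
  unfolding ser_def using sc_suminf[OF ok_summable[OF assms], of c] by (simp add: sc_sc)

definition mm :: "'a \<Rightarrow> 'a \<Rightarrow> 'a" where
  "mm x y = ser (\<lambda>n. complex_of_real (ww n) * gg n x * gg n y)"

lemma mm_term_bound:
  "norm (sc (complex_of_real (ww n) * gg n x * gg n y) (uu n)) \<le> (norm x * norm y) * (1/2)^(Suc n)"
proof -
  have "norm (sc (complex_of_real (ww n) * gg n x * gg n y) (uu n))
        = ww n * norm (gg n x) * norm (gg n y) * norm (uu n)"
    using ww_pos[of n] by (simp add: sc_norm norm_mult)
  also have "\<dots> \<le> ww n * (norm x * KK n) * (norm y * KK n) * norm (uu n)"
    using ww_pos[of n] KK[of n]
    by (intro mult_right_mono mult_mono mult_left_mono) (auto intro: order_trans[OF _ KK(2)])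
  also have "\<dots> = (norm x * norm y) * (ww n * (KK n)\<^sup>2 * norm (uu n))" by (simp add: power2_eq_square algebra_simps)
  also have "\<dots> \<le> (norm x * norm y) * (1/2)^(Suc n)" by (intro mult_left_mono ww_bound1) auto
  finally show ?thesis .
qed

lemma mm_ok: "ok (\<lambda>n. complex_of_real (ww n) * gg n x * gg n y)"
  by (rule ok_bound[OF mm_term_bound])

lemma gg_mm: "gg k (mm x y) = complex_of_real (ww k) * gg k x * gg k y"
  unfolding mm_def by (rule ser_gg[OF mm_ok])

lemma mm_M: "mm x y \<in> M" unfolding mm_def by (rule ser_M[OF mm_ok])

lemma mm_norm: "norm (mm x y) \<le> norm x * norm y"
proof -
  have s: "summable (\<lambda>n. norm (sc (complex_of_real (ww n) * gg n x * gg n y) (uu n)))"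
    using mm_ok unfolding ok_def .
  have "norm (mm x y) \<le> (\<Sum>n. norm (sc (complex_of_real (ww n) * gg n x * gg n y) (uu n)))"
    unfolding mm_def ser_def by (rule summable_norm[OF s])
  also have "\<dots> \<le> (\<Sum>n. (norm x * norm y) * (1/2)^(Suc n))"
    by (rule suminf_le[OF mm_term_bound s half_summable])
  also have "\<dots> = norm x * norm y"
    using sums_mult[OF power_half_series, of "norm x * norm y"] by (simp add: sums_iff)
  finally show ?thesis .
qed

lemma mm_comm: "mm x y = mm y x" unfolding mm_def by (simp add: algebra_simps)

lemma mm_addl: "mm (x + y) z = mm x z + mm y z"
proof -
  have e: "(\<lambda>n. complex_of_real (ww n) * gg n (x + y) * gg n z) =
    (\<lambda>n. complex_of_real (ww n) * gg n x * gg n z + complex_of_real (ww n) * gg n y * gg n z)"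
    by (rule ext) (simp add: CL_add[OF gg_CL] algebra_simps)
  have "mm (x + y) z = ser (\<lambda>n. complex_of_real (ww n) * gg n x * gg n z + complex_of_real (ww n) * gg n y * gg n z)"
    unfolding mm_def by (simp only: e)
  also have "\<dots> = mm x z + mm y z" unfolding mm_def by (rule ser_add[symmetric, OF mm_ok mm_ok])
  finally show ?thesis .
qed

lemma mm_addr: "mm x (y + z) = mm x y + mm x z"
  using mm_addl mm_comm by metis

lemma mm_scl: "mm (sc c x) y = sc c (mm x y)"
proof -
  have e: "(\<lambda>n. complex_of_real (ww n) * gg n (sc c x) * gg n y) =
    (\<lambda>n. c * (complex_of_real (ww n) * gg n x * gg n y))"
    by (rule ext) (simp add: CL_sc[OF gg_CL] algebra_simps)
  have "mm (sc c x) y = ser (\<lambda>n. c * (complex_of_real (ww n) * gg n x * gg n y))"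
    unfolding mm_def by (simp only: e)
  also have "\<dots> = sc c (mm x y)" unfolding mm_def by (rule ser_sc[symmetric, OF mm_ok])
  finally show ?thesis .
qed

lemma mm_scr: "mm x (sc c y) = sc c (mm x y)"
  using mm_scl mm_comm by metis

lemma mm_assoc: "mm (mm x y) z = mm x (mm y z)"
  unfolding mm_def[of "mm x y"] mm_def[of x "mm y z"] by (simp add: gg_mm algebra_simps)

lemma mm_product: "comm_banach_algebra_product sc mm"
  unfolding comm_banach_algebra_product_def
  using mm_addl mm_addr mm_scl mm_scr mm_assoc mm_comm mm_norm by blast

end

lemma digits_unique:
  fixes B :: nat
  shows "(\<forall>i<n. f i < B) \<Longrightarrow> (\<forall>i<n. g i < B) \<Longrightarrow> (\<Sum>i<n. f i * B^i) = (\<Sum>i<n. g i * B^i)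
    \<Longrightarrow> (\<forall>i<n. f i = g i)"
proof (induction n arbitrary: f g)
  case 0 then show ?case by simp
next
  case (Suc n)
  have sf: "(\<Sum>i<Suc n. f i * B^i) = f 0 + B * (\<Sum>i<n. f (Suc i) * B^i)"
    unfolding sum.lessThan_Suc_shift by (simp add: sum_distrib_left algebra_simps)
  have sg: "(\<Sum>i<Suc n. g i * B^i) = g 0 + B * (\<Sum>i<n. g (Suc i) * B^i)"
    unfolding sum.lessThan_Suc_shift by (simp add: sum_distrib_left algebra_simps)
  have f0: "f 0 < B" and g0: "g 0 < B" using Suc.prems by auto
  define X where "X = (\<Sum>i<n. f (Suc i) * B^i)"
  define Y where "Y = (\<Sum>i<n. g (Suc i) * B^i)"
  have eq: "f 0 + B * X = g 0 + B * Y"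
    using Suc.prems(3) sf sg unfolding X_def Y_def by simp
  have m1: "(f 0 + B * X) mod B = f 0" using f0 by simp
  have m2: "(g 0 + B * Y) mod B = g 0" using g0 by simp
  have e0: "f 0 = g 0" using eq m1 m2 by simp
  have d1: "(f 0 + B * X) div B = X" using f0 by simp
  have d2: "(g 0 + B * Y) div B = Y" using g0 by simp
  have XY: "X = Y" using eq d1 d2 by simp
  have pf: "\<forall>i<n. f (Suc i) < B" using Suc.prems(1) by simp
  have pg: "\<forall>i<n. g (Suc i) < B" using Suc.prems(2) by simp
  have rest: "\<forall>i<n. f (Suc i) = g (Suc i)"
    using Suc.IH[OF pf pg] XY unfolding X_def Y_def by blast
  show ?case
  proof (intro allI impI)
    fix i assume "i < Suc n"
    then show "f i = g i" using e0 rest by (cases i) auto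
  qed
qed

context cbM begin

definition tt :: "nat \<Rightarrow> real" where "tt n = (ww n)\<^sup>2"
definition DD :: "nat \<Rightarrow> nat" where "DD n = fst (prod_decode n)"
definition ss :: "nat \<Rightarrow> nat \<Rightarrow> real" where "ss i n = (tt n) ^ ((DD n + 1)^i)"
definition coef :: "nat \<Rightarrow> nat \<Rightarrow> complex" where "coef i n = complex_of_real (ss i n / ww n)"
definition xg :: "nat \<Rightarrow> 'a" where "xg i = ser (coef i)"
definition gam :: "nat \<Rightarrow> 'a \<Rightarrow> complex" where "gam k v = complex_of_real (ww k) * gg k v"

lemma tt_pos: "tt n > 0" unfolding tt_def using ww_pos[of n] by simp
lemma tt_le1: "tt n \<le> 1"
proof -
  have "(1/2::real)^Suc n \<le> 1" by (rule power_le_one) auto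
  then have "ww n \<le> 1" using ww_le[of n] by linarith
  then show ?thesis unfolding tt_def using ww_pos[of n] by (simp add: power_le_one)
qed

lemma ss_le: "ss i n \<le> tt n"
  unfolding ss_def using tt_pos[of n] tt_le1[of n]
  by (metis less_eq_real_def one_le_power power_decreasing power_one_right le_add2 Suc_eq_plus1 Suc_le_eq zero_less_Suc)

lemma ss_nonneg: "ss i n \<ge> 0" unfolding ss_def using tt_pos[of n] by simp

lemma coef_ok: "ok (coef i)"
proof (rule ok_bound[of _ 1])
  fix n
  have "cmod (coef i n) = ss i n / ww n"
    unfolding coef_def norm_of_real using ss_nonneg[of i n] ww_pos[of n] by simp
  then have "norm (sc (coef i n) (uu n)) = ss i n / ww n * norm (uu n)"
    by (simp add: sc_norm)
  also have "\<dots> \<le> tt n / ww n * norm (uu n)"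
    using ss_le[of i n] ww_pos[of n] by (intro mult_right_mono divide_right_mono) auto
  also have "tt n / ww n = ww n" unfolding tt_def using ww_pos[of n] by (simp add: power2_eq_square)
  also have "ww n * norm (uu n) \<le> 1 * (1/2)^Suc n" using ww_bound2[of n] by simp
  finally show "norm (sc (coef i n) (uu n)) \<le> 1 * (1/2)^Suc n" .
qed

lemma xg_M: "xg i \<in> M" unfolding xg_def by (rule ser_M[OF coef_ok])

lemma gam_xg: "gam k (xg i) = complex_of_real (ss i k)"
  unfolding gam_def xg_def ser_gg[OF coef_ok] coef_def using ww_pos[of k] by simp

lemma gam_mm: "gam k (mm a b) = gam k a * gam k b"
  unfolding gam_def gg_mm by (simp add: algebra_simps)

lemma gam_add: "gam k (a + b) = gam k a + gam k b"
  unfolding gam_def by (simp add: CL_add[OF gg_CL] algebra_simps)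

lemma gam_sc: "gam k (sc c a) = c * gam k a"
  unfolding gam_def by (simp add: CL_sc[OF gg_CL] algebra_simps)

lemma gam_sum: "gam k (\<Sum>i\<in>A. f i) = (\<Sum>i\<in>A. gam k (f i))"
  unfolding gam_def by (simp add: CL_sum[OF gg_CL] sum_distrib_left)

lemma gam_0: "gam k 0 = 0"
  unfolding gam_def by (simp add: CL_0[OF gg_CL])

lemma gam_apow: "gam k (apow mm a n) = (gam k a) ^ Suc n"
  by (induction n) (simp_all add: gam_mm)

lemma gam_mprod: "l \<noteq> [] \<Longrightarrow> gam k (mprod mm l) = prod_list (map (gam k) l)"
  by (induction mm l rule: mprod.induct) (simp_all add: gam_mm)

lemma gam_mon:
  assumes fin: "finite {i. \<alpha> i \<noteq> 0}" and nz: "\<alpha> \<noteq> (\<lambda>_. 0)"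
  shows "gam k (monomial_eval mm xg \<alpha>) = complex_of_real (\<Prod>i\<in>{i. \<alpha> i \<noteq> 0}. (ss i k) ^ \<alpha> i)"
proof -
  define S where "S = {i. \<alpha> i \<noteq> 0}"
  define L where "L = sorted_list_of_set S"
  have setL: "set L = S" and dL: "distinct L" using fin unfolding L_def S_def by auto
  have "S \<noteq> {}" using nz unfolding S_def by auto
  then have Lne: "L \<noteq> []" using setL by auto
  have "gam k (monomial_eval mm xg \<alpha>) = prod_list (map (gam k) (map (\<lambda>i. apow mm (xg i) (\<alpha> i - 1)) L))"
    unfolding monomial_eval_def S_def[symmetric] L_def[symmetric] using Lne by (simp add: gam_mprod)
  also have "map (gam k) (map (\<lambda>i. apow mm (xg i) (\<alpha> i - 1)) L) = map (\<lambda>i. complex_of_real ((ss i k) ^ \<alpha> i)) L"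
  proof -
    have "map (gam k) (map (\<lambda>i. apow mm (xg i) (\<alpha> i - 1)) L) = map (\<lambda>i. gam k (apow mm (xg i) (\<alpha> i - 1))) L"
      by simp
    also have "\<dots> = map (\<lambda>i. complex_of_real ((ss i k) ^ \<alpha> i)) L"
    proof (rule map_cong[OF refl])
      fix i assume "i \<in> set L"
      then have "\<alpha> i \<noteq> 0" using setL S_def by auto
      then show "gam k (apow mm (xg i) (\<alpha> i - 1)) = complex_of_real ((ss i k) ^ \<alpha> i)"
        by (simp add: gam_apow gam_xg)
    qed
    finally show ?thesis .
  qed
  also have "prod_list (map (\<lambda>i. complex_of_real ((ss i k) ^ \<alpha> i)) L) = (\<Prod>i\<in>S. complex_of_real ((ss i k) ^ \<alpha> i))"
    using prod.distinct_set_conv_list[OF dL] setL by metis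
  also have "\<dots> = complex_of_real (\<Prod>i\<in>S. (ss i k) ^ \<alpha> i)" by simp
  finally show ?thesis unfolding S_def .
qed

end

context cbM begin

lemma DD_enc: "DD (prod_encode (D, j)) = D" unfolding DD_def by simp

lemma tt_inj: "inj tt"
proof (rule injI)
  fix a b assume "tt a = tt b"
  then have "ww a = ww b" unfolding tt_def using ww_pos[of a] ww_pos[of b] by (simp add: power2_eq_iff)
  then show "a = b" using ww_strict[of a b] ww_strict[of b a] by (cases a b rule: linorder_cases) auto
qed

lemma xg_indep: "alg_independent sc mm xg"
  unfolding alg_independent_def
proof (intro allI impI ballI)
  fix S :: "(nat \<Rightarrow> nat) set" and c :: "(nat \<Rightarrow> nat) \<Rightarrow> complex" and \<alpha>0
  assume fin: "finite S" and H: "\<forall>\<alpha>\<in>S. \<alpha> \<noteq> (\<lambda>_. 0) \<and> finite {i. \<alpha> i \<noteq> 0}"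
    and Z: "(\<Sum>\<alpha>\<in>S. sc (c \<alpha>) (monomial_eval mm xg \<alpha>)) = 0" and a0: "\<alpha>0 \<in> S"
  define U where "U = (\<Union>\<alpha>\<in>S. {i. \<alpha> i \<noteq> 0} \<union> \<alpha> ` {i. \<alpha> i \<noteq> 0})"
  have finU: "finite U" unfolding U_def using fin H by auto
  define D where "D = Suc (Max U)"
  have bnd: "i < D \<and> \<alpha> i < D" if "\<alpha> \<in> S" "\<alpha> i \<noteq> 0" for \<alpha> i
  proof -
    have "i \<in> U" "\<alpha> i \<in> U" unfolding U_def using that by auto
    then show ?thesis unfolding D_def using Max_ge[OF finU] by (simp add: le_imp_less_Suc)
  qed
  define E where "E \<alpha> = (\<Sum>i\<in>{i. \<alpha> i \<noteq> 0}. \<alpha> i * (D+1)^i)" for \<alpha> :: "nat \<Rightarrow> nat"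
  have E_alt: "E \<alpha> = (\<Sum>i<D. \<alpha> i * (D+1)^i)" if "\<alpha> \<in> S" for \<alpha>
    unfolding E_def by (rule sum.mono_neutral_right[symmetric]) (use bnd[OF that] in auto)
  have E_inj: "\<alpha> = \<beta>" if "\<alpha> \<in> S" "\<beta> \<in> S" "E \<alpha> = E \<beta>" for \<alpha> \<beta>
  proof
    fix i
    have lt: "\<forall>i<D. \<gamma> i < D + 1" if "\<gamma> \<in> S" for \<gamma>
    proof (intro allI impI)
      fix i assume "i < D"
      show "\<gamma> i < D + 1" using bnd[OF that, of i] by (cases "\<gamma> i = 0") auto
    qed
    have "\<forall>i<D. \<alpha> i = \<beta> i"
      by (rule digits_unique[OF lt[OF that(1)] lt[OF that(2)]]) (use that E_alt in simp)
    moreover have "\<alpha> i = 0 \<and> \<beta> i = 0" if "\<not> i < D"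
      using bnd[OF \<open>\<alpha> \<in> S\<close>, of i] bnd[OF \<open>\<beta> \<in> S\<close>, of i] that by auto
    ultimately show "\<alpha> i = \<beta> i" by (cases "i < D") auto
  qed
  define Q where "Q = (\<Sum>\<alpha>\<in>S. monom (c \<alpha>) (E \<alpha>))"
  have vanish: "poly Q (complex_of_real (tt (prod_encode (D, j)))) = 0" for j
  proof -
    define k where "k = prod_encode (D, j)"
    have Dk: "DD k = D" unfolding k_def by (rule DD_enc)
    have mon: "gam k (monomial_eval mm xg \<alpha>) = (complex_of_real (tt k)) ^ E \<alpha>" if "\<alpha> \<in> S" for \<alpha>
    proof -
      have "gam k (monomial_eval mm xg \<alpha>) = complex_of_real (\<Prod>i\<in>{i. \<alpha> i \<noteq> 0}. (ss i k) ^ \<alpha> i)"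
        using H that by (intro gam_mon) auto
      also have "(\<Prod>i\<in>{i. \<alpha> i \<noteq> 0}. (ss i k) ^ \<alpha> i) = (\<Prod>i\<in>{i. \<alpha> i \<noteq> 0}. (tt k) ^ (\<alpha> i * (D+1)^i))"
        by (rule prod.cong) (simp_all add: ss_def Dk power_mult[symmetric] mult.commute)
      also have "\<dots> = (tt k) ^ E \<alpha>" unfolding E_def by (rule power_sum[symmetric])
      finally show ?thesis by simp
    qed
    have "0 = gam k (\<Sum>\<alpha>\<in>S. sc (c \<alpha>) (monomial_eval mm xg \<alpha>))" using Z gam_0 by simp
    also have "\<dots> = (\<Sum>\<alpha>\<in>S. c \<alpha> * (complex_of_real (tt k)) ^ E \<alpha>)"
      by (simp add: gam_sum gam_sc mon)
    also have "\<dots> = poly Q (complex_of_real (tt k))"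
      unfolding Q_def by (simp add: poly_sum poly_monom)
    finally show ?thesis unfolding k_def by simp
  qed
  have "Q = 0"
  proof (rule ccontr)
    assume "Q \<noteq> 0"
    then have "finite {x. poly Q x = 0}" by (rule poly_roots_finite)
    moreover have "range (\<lambda>j. complex_of_real (tt (prod_encode (D, j)))) \<subseteq> {x. poly Q x = 0}"
      using vanish by auto
    moreover have "infinite (range (\<lambda>j. complex_of_real (tt (prod_encode (D, j)))))"
    proof (rule range_inj_infinite, rule injI)
      fix a b assume "complex_of_real (tt (prod_encode (D, a))) = complex_of_real (tt (prod_encode (D, b)))"
      then have "tt (prod_encode (D, a)) = tt (prod_encode (D, b))" by simp
      then have "prod_encode (D, a) = prod_encode (D, b)" using tt_inj by (simp add: inj_eq)
      then show "a = b" using inj_prod_encode[of UNIV] by (simp add: inj_on_def)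
    qed
    ultimately show False using finite_subset by blast
  qed
  have "coeff Q (E \<alpha>0) = (\<Sum>\<alpha>\<in>S. if E \<alpha> = E \<alpha>0 then c \<alpha> else 0)"
    unfolding Q_def by (simp add: coeff_sum)
  also have "\<dots> = (\<Sum>\<alpha>\<in>S. if \<alpha> = \<alpha>0 then c \<alpha> else 0)"
    by (rule sum.cong) (use E_inj a0 in auto)
  also have "\<dots> = c \<alpha>0" using fin a0 by simp
  finally show "c \<alpha>0 = 0" using \<open>Q = 0\<close> by simp
qed

lemma gen_in_M: "y \<in> gen_algebra sc mm xg \<Longrightarrow> y \<in> M"
proof (induction rule: gen_algebra.induct)
  case (gen n) then show ?case by (rule xg_M)
next
  case (add a b) then show ?case using V.subspace_add[OF Msub] by blast
next
  case (smult a c) then show ?case using V.subspace_scale[OF Msub] by blast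
next
  case (mult a b) then show ?case using mm_M by blast
qed

end

theorem theorem4p3:
  fixes sc :: "complex \<Rightarrow> 'a::banach \<Rightarrow> 'a" and T :: "'a \<Rightarrow> 'a"
  assumes "complex_banach sc"
    and "bounded_clinear_op sc T"
    and "FHC T \<noteq> {}"
    and "\<exists>M. fhc_subspace sc T M"
  shows "\<exists>m. comm_banach_algebra_product sc m \<and> strongly_algebrable sc m (FHC T)"
proof -
  obtain M where M: "fhc_subspace sc T M" using assms(4) by blast
  have Ms: "module.subspace sc M" and Mc: "closed M" and Mi: "\<And>F. finite F \<Longrightarrow> \<not> M \<subseteq> module.span sc F"
    and Mf: "\<And>x. x \<in> M \<Longrightarrow> x \<noteq> 0 \<Longrightarrow> x \<in> FHC T"
    using M unfolding fhc_subspace_def by blast+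
  interpret cbM sc M
    by unfold_locales (use assms(1) Ms Mc Mi in auto)
  have "strongly_algebrable sc mm (FHC T)"
    unfolding strongly_algebrable_def using xg_indep gen_in_M Mf by blast
  then show ?thesis using mm_product by blast
qed

end
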